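(* For $j\ge 0$ define the permutation of $\{1,\dots,2j+5\}$ $$\alpha^{(j)}=2j+4,\ 3,\ \omega^{(j)},\ 1,\ 5,\ 2,$$ where $\omega^{(j)}$ is the concatenation, for $i=j,j-1,\dots,1$ (in this order), of the pairs $2i+2,\,2i+5$; that is, $\omega^{(j)}=2j+2,2j+5,2j,2j+3,2j-2,2j+1,\dots,6,9,4,7$ (and $\omega^{(0)}$ is empty, so $\alpha^{(0)}=43152$). Then: (i) the set $\{\alpha^{(j)}\}_{j\ge0}$ is an infinite antichain in the permutation pattern poset; (ii) no $\alpha^{(j)}$ is $2$-sortable; (iii) each $\alpha^{(j)}$ is minimal with this property: deleting any single entry of $\alpha^{(j)}$ (and standardizing) yields a $2$-sortable permutation.
   Context: The $\mathfrak{D}^k\mathfrak{I}$ machine consists of $k$ stacks $D_1,\dots,D_k$ (decreasing stacks) followed in series by a stack $I$ (increasing stack). The input permutation is read from left to right. The elements of each $D_i$ must be in decreasing order from top to bottom (top is largest), and those of $I$ in increasing order from top to bottom (top is smallest). Operations: $d_0$ pushes the next input element into $D_1$; $d_i$ ($1\le i\le k-1$) moves the top of $D_i$ to $D_{i+1}$; $d_k$ moves the top of $D_k$ to $I$; $d_{k+1}$ pops the top of $I$ and appends it to the output. An operation is legal if it respects the stack restrictions. A permutation $\pi$ is $k$-sortable if some sequence of legal operations of the $\mathfrak{D}^k\mathfrak{I}$ machine outputs the elements of $\pi$ in increasing order. The permutation pattern poset orders permutations by pattern containment $\sigma\le\pi$. *)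

theory Defs
  imports Main "HOL-Library.Sublist"
begin

text \<open>Permutations are lists of natural numbers (one-line notation, entries 1..n).\<close>

definition order_iso :: "nat list \<Rightarrow> nat list \<Rightarrow> bool" where
  "order_iso xs ys \<longleftrightarrow> length xs = length ys \<and>
     (\<forall>i<length xs. \<forall>j<length xs. (xs ! i < xs ! j) = (ys ! i < ys ! j))"

definition pattern_le :: "nat list \<Rightarrow> nat list \<Rightarrow> bool" where
  "pattern_le \<sigma> \<pi> \<longleftrightarrow> (\<exists>xs. subseq xs \<pi> \<and> order_iso xs \<sigma>)"

definition standardize :: "nat list \<Rightarrow> nat list" where
  "standardize xs = map (\<lambda>x. card {y \<in> set xs. y \<le> x}) xs"

definition delete_at :: "nat \<Rightarrow> nat list \<Rightarrow> nat list" where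
  "delete_at p xs = take p xs @ drop (Suc p) xs"

text \<open>Machine D^k I. State: (remaining input, [D_1,...,D_k], I, output).
  Stacks are lists with the top at the head. D stacks: top is largest;
  I: top is smallest.\<close>
type_synonym mstate = "nat list \<times> nat list list \<times> nat list \<times> nat list"

inductive mstep :: "nat \<Rightarrow> mstate \<Rightarrow> mstate \<Rightarrow> bool" for k :: nat where
  d0: "0 < k \<Longrightarrow> (D ! 0 = [] \<or> hd (D ! 0) < x) \<Longrightarrow>
       mstep k (x # inp, D, I, out) (inp, D[0 := x # D ! 0], I, out)"
| dmove: "Suc i < k \<Longrightarrow> D ! i \<noteq> [] \<Longrightarrow>
       (D ! Suc i = [] \<or> hd (D ! Suc i) < hd (D ! i)) \<Longrightarrow>
       mstep k (inp, D, I, out)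
         (inp, D[i := tl (D ! i), Suc i := hd (D ! i) # D ! Suc i], I, out)"
| dk: "0 < k \<Longrightarrow> D ! (k - 1) \<noteq> [] \<Longrightarrow>
       (I = [] \<or> hd (D ! (k - 1)) < hd I) \<Longrightarrow>
       mstep k (inp, D, I, out) (inp, D[k - 1 := tl (D ! (k - 1))], hd (D ! (k - 1)) # I, out)"
| dout: "mstep k (inp, D, x # I, out) (inp, D, I, out @ [x])"

definition sortable :: "nat \<Rightarrow> nat list \<Rightarrow> bool" where
  "sortable k \<pi> \<longleftrightarrow>
     (\<exists>D I. (mstep k)\<^sup>*\<^sup>* (\<pi>, replicate k [], [], []) ([], D, I, sort \<pi>))"

definition omega :: "nat \<Rightarrow> nat list" where
  "omega j = concat (map (\<lambda>i. [2*i+2, 2*i+5]) (rev [1..<j+1]))"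

definition alpha :: "nat \<Rightarrow> nat list" where
  "alpha j = [2*j+4, 3] @ omega j @ [1, 5, 2]"

lemma "alpha 0 = [4,3,1,5,2]" "alpha 2 = [8,3,6,9,4,7,1,5,2]"
  by (simp_all add: alpha_def omega_def upt_rec)

end

theory Submission
  imports Defs "HOL-Library.Multiset"
begin


lemma st_rd: "a=[] \<or> hd a < x \<Longrightarrow> mstep 2 (x#inp,[a,b],I,out) (inp,[x#a,b],I,out)"
  using mstep.d0[of 2 "[a,b]" x inp I out] by simp
lemma st_mv: "b=[] \<or> hd b < x \<Longrightarrow> mstep 2 (inp,[x#a,b],I,out) (inp,[a,x#b],I,out)"
  using mstep.dmove[of 0 2 "[x#a,b]" inp I out] by simp
lemma st_tk: "I=[] \<or> x < hd I \<Longrightarrow> mstep 2 (inp,[a,x#b],I,out) (inp,[a,b],x#I,out)"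
  using mstep.dk[of 2 "[a,x#b]" I inp out] by simp
lemma st_ot: "mstep 2 (inp,[a,b],x#I,out) (inp,[a,b],I,out@[x])"
  using mstep.dout[of 2 inp "[a,b]" x I out] by simp

lemma mstep2_iff:
  "mstep 2 (inp, [a,b], I, out) t \<longleftrightarrow>
   (\<exists>x inp'. inp = x#inp' \<and> (a=[] \<or> hd a < x) \<and> t = (inp', [x#a, b], I, out)) \<or>
   (\<exists>x a'. a = x#a' \<and> (b = [] \<or> hd b < x) \<and> t = (inp, [a', x # b], I, out)) \<or>
   (\<exists>x b'. b = x#b' \<and> (I=[] \<or> x < hd I) \<and> t = (inp, [a, b'], x # I, out)) \<or>
   (\<exists>x I'. I = x#I' \<and> t = (inp,[a,b],I',out @ [x]))" (is "?L = ?R")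
proof
  assume "?L"
  then show "?R" 
  proof (cases rule: mstep.cases)
    case (dmove i)
    then have "i = 0" by simp
    with dmove show ?thesis by (cases a) auto
  next
    case dk then show ?thesis by (cases b) auto
  qed auto
next
  assume "?R"
  then show "?L" by (auto intro: st_rd st_mv st_tk st_ot)
qed


lemma mstep2E:
  assumes "mstep 2 (inp,[a,b],I,out) t"
  obtains (rd) x inp' where "inp = x#inp'" "a=[] \<or> hd a < x" "t = (inp', [x#a, b], I, out)"
  | (mv) x a' where "a = x#a'" "b = [] \<or> hd b < x" "t = (inp, [a', x # b], I, out)"
  | (tk) x b' where "b = x#b'" "I=[] \<or> x < hd I" "t = (inp, [a, b'], x # I, out)"
  | (ot) x I' where "I = x#I'" "t = (inp,[a,b],I',out @ [x])"
  using assms unfolding mstep2_iff by blast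

definition inv2 :: "nat list \<Rightarrow> mstate \<Rightarrow> bool" where
  "inv2 \<pi> s \<longleftrightarrow> (\<exists>inp a b I out. s = (inp,[a,b],I,out) \<and>
     distinct (inp@a@b@I@out) \<and> mset (inp@a@b@I@out) = mset \<pi> \<and>
     sorted_wrt (>) a \<and> sorted_wrt (>) b \<and> sorted_wrt (<) I)"

lemma sw_gt_hd: "sorted_wrt (>) (a::nat list) \<Longrightarrow> y \<in> set a \<Longrightarrow> y \<le> hd a"
  by (cases a) (auto simp: less_imp_le)
lemma sw_lt_hd: "sorted_wrt (<) (a::nat list) \<Longrightarrow> y \<in> set a \<Longrightarrow> hd a \<le> y"
  by (cases a) (auto simp: less_imp_le)

lemma inv2_step: "inv2 \<pi> s \<Longrightarrow> mstep 2 s t \<Longrightarrow> inv2 \<pi> t"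
proof -
  assume "inv2 \<pi> s" "mstep 2 s t"
  then obtain inp a b I out where s: "s = (inp,[a,b],I,out)" and
    di: "distinct (inp@a@b@I@out)" and ms: "mset (inp@a@b@I@out) = mset \<pi>" and
    sa: "sorted_wrt (>) a" and sb: "sorted_wrt (>) b" and sI: "sorted_wrt (<) I"
    unfolding inv2_def by blast
  from \<open>mstep 2 s t\<close> show ?thesis unfolding s
  proof (cases rule: mstep2E)
    case (rd x inp') note h = this
    have "sorted_wrt (>) (x#a)" using sa h(2) sw_gt_hd[OF sa] by fastforce
    then show ?thesis using h di ms sb sI unfolding inv2_def by (auto simp: union_ac)
  next
    case (mv x a') note h = this
    have "sorted_wrt (>) (x#b)" using sb h(2) sw_gt_hd[OF sb] by fastforce
    then show ?thesis using h di ms sa sI unfolding inv2_def by (auto simp: union_ac)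
  next
    case (tk x b') note h = this
    have "sorted_wrt (<) (x#I)" using sI h(2) sw_lt_hd[OF sI] by fastforce
    then show ?thesis using h di ms sa sb unfolding inv2_def by (auto simp: union_ac)
  next
    case (ot x I') note h = this
    then show ?thesis using h di ms sa sb sI unfolding inv2_def by (auto simp: union_ac)
  qed
qed

lemma inv2_reach: "(mstep 2)\<^sup>*\<^sup>* s t \<Longrightarrow> inv2 \<pi> s \<Longrightarrow> inv2 \<pi> t"
  by (induction rule: rtranclp_induct) (auto intro: inv2_step)

lemma inv2_init: "distinct \<pi> \<Longrightarrow> inv2 \<pi> (\<pi>, replicate 2 [], [], [])"
  unfolding inv2_def by (simp add: numeral_2_eq_2)



lemma omega_0[simp]: "omega 0 = []" by (simp add: omega_def)
lemma omega_Suc: "omega (Suc k) = [2*k+4, 2*k+7] @ omega k"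
  by (simp add: omega_def)

lemma set_omega: "set (omega k) = {x. \<exists>i. 1 \<le> i \<and> i \<le> k \<and> (x = 2*i+2 \<or> x = 2*i+5)}"
proof (induction k)
  case 0 then show ?case by simp
next
  case (Suc k)
  have "set (omega (Suc k)) = {2*k+4, 2*k+7} \<union> set (omega k)" by (simp add: omega_Suc)
  also have "\<dots> = {x. \<exists>i. 1 \<le> i \<and> i \<le> Suc k \<and> (x = 2*i+2 \<or> x = 2*i+5)}"
    unfolding Suc
    apply (rule set_eqI)
    apply (simp add: le_Suc_eq)
    apply (rule iffI)
     apply (elim disjE exE)
        apply (rule exI[of _ "Suc k"], simp)
       apply (rule exI[of _ "Suc k"], simp)
      apply blast
    apply (elim exE conjE disjE)
       apply auto
    done
  finally show ?case .
qed

lemma omega_bounds: "x \<in> set (omega k) \<Longrightarrow> 4 \<le> x \<and> x \<le> 2*k+5 \<and> x \<noteq> 5 \<and> x \<noteq> 2*k+4"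
  unfolding set_omega by auto presburger+

lemma distinct_omega: "distinct (omega k)"
proof (induction k)
  case 0 then show ?case by simp
next
  case (Suc k)
  have "2*k+4 \<notin> set (omega k)" "2*k+7 \<notin> set (omega k)" using omega_bounds by fastforce+
  then show ?case using Suc by (simp add: omega_Suc)
qed

lemma alpha_eq: "alpha j = [2*j+4, 3] @ omega j @ [1,5,2]"
  by (simp add: alpha_def)

lemma distinct_alpha: "distinct (alpha j)"
proof -
  have "\<And>x. x \<in> set (omega j) \<Longrightarrow> x \<noteq> 2*j+4 \<and> x \<noteq> 3 \<and> x \<noteq> 1 \<and> x \<noteq> 5 \<and> x \<noteq> 2"
    using omega_bounds by fastforce
  then show ?thesis using distinct_omega[of j] unfolding alpha_eq by auto
qed

lemma length_omega: "length (omega k) = 2*k"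
  by (induction k) (auto simp: omega_Suc)

lemma length_alpha: "length (alpha j) = 2*j+5"
  by (simp add: alpha_eq length_omega)



definition G1 :: "nat list \<Rightarrow> nat list \<Rightarrow> nat list \<Rightarrow> nat list \<Rightarrow> nat list \<Rightarrow> bool" where
  "G1 inp a b I out \<longleftrightarrow> \<not> sorted out \<or>
     (\<exists>x\<in>set out. \<exists>y\<in>set inp \<union> set a \<union> set b \<union> set I. y \<le> x)"

definition ahead :: "nat list \<Rightarrow> nat list \<Rightarrow> nat list \<Rightarrow> nat \<Rightarrow> nat \<Rightarrow> bool" where
  "ahead inp a b d e \<longleftrightarrow> (d \<in> set b \<and> e \<in> set b \<union> set a \<union> set inp) \<or>
     (d \<in> set a \<and> e \<in> set a \<union> set inp) \<or> (\<exists>u v. inp = u @ d # v \<and> e \<in> set v)"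

definition Dm :: "nat list \<Rightarrow> nat list \<Rightarrow> nat list \<Rightarrow> nat list \<Rightarrow> bool" where
  "Dm inp a b I \<longleftrightarrow> (\<exists>c d e. c \<in> set I \<and> c < d \<and> e < c \<and> ahead inp a b d e)"

definition bad :: "mstate \<Rightarrow> bool" where
  "bad s \<longleftrightarrow> (\<exists>inp a b I out. s = (inp,[a,b],I,out) \<and> (G1 inp a b I out \<or> Dm inp a b I))"

lemma ahead_set: "ahead inp a b d e \<Longrightarrow> e \<in> set inp \<union> set a \<union> set b"
  unfolding ahead_def by auto

lemma G1_step:
  assumes "inv2 \<pi> (inp,[a,b],I,out)" "mstep 2 (inp,[a,b],I,out) (inp',[a',b'],I',out')"
    "G1 inp a b I out"
  shows "G1 inp' a' b' I' out'"
proof -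
  from assms(1) have di: "distinct (inp@a@b@I@out)" unfolding inv2_def by auto
  from assms(2) show ?thesis
  proof (cases rule: mstep2E)
    case (ot x I0)
    show ?thesis
    proof (cases "sorted out")
      case False then show ?thesis using ot by (auto simp: G1_def sorted_append)
    next
      case True
      then obtain z y where z: "z \<in> set out" "y \<in> set inp \<union> set a \<union> set b \<union> set I" "y \<le> z"
        using assms(3) unfolding G1_def by blast
      show ?thesis
      proof (cases "y = x")
        case True
        then have "y \<noteq> z" using di z(1) ot(1) by auto
        then have "x < z" using z True by auto
        then have "\<not> sorted (out @ [x])" using z(1) by (fastforce simp: sorted_append)
        then show ?thesis using ot by (simp add: G1_def)
      next
        case False
        then show ?thesis using ot z unfolding G1_def by (auto simp: sorted_append)
      qed
    qed
  qed (use assms(3) in \<open>auto simp: G1_def\<close>)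
qed

lemma Dm_step:
  assumes "inv2 \<pi> (inp,[a,b],I,out)" "mstep 2 (inp,[a,b],I,out) (inp',[a',b'],I',out')"
    "Dm inp a b I"
  shows "G1 inp' a' b' I' out' \<or> Dm inp' a' b' I'"
proof -
  from assms(1) have di: "distinct (inp@a@b@I@out)" and sa: "sorted_wrt (>) a"
    and sb: "sorted_wrt (>) b" and sI: "sorted_wrt (<) I" unfolding inv2_def by auto
  from assms(3) obtain c d e where c: "c \<in> set I" "c < d" "e < c" and ah: "ahead inp a b d e"
    unfolding Dm_def by blast
  from assms(2) show ?thesis
  proof (cases rule: mstep2E)
    case (rd x inp0)
    have "ahead inp0 (x#a) b d e"
    proof -
      consider "d \<in> set b" "e \<in> set b \<union> set a \<union> set inp" | "d \<in> set a" "e \<in> set a \<union> set inp"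
        | u v where "inp = u @ d # v" "e \<in> set v" using ah unfolding ahead_def by blast
      then show ?thesis
      proof cases
        case 1 then show ?thesis using rd unfolding ahead_def by auto
      next
        case 2
        have "e \<noteq> x" using rd(2) sw_gt_hd[OF sa 2(1)] c 2 by auto
        then show ?thesis using 2 rd unfolding ahead_def by auto
      next
        case 3
        show ?thesis
        proof (cases u)
          case Nil then show ?thesis using 3 rd unfolding ahead_def by auto
        next
          case (Cons w u')
          then show ?thesis using 3 rd unfolding ahead_def by auto
        qed
      qed
    qed
    then show ?thesis using rd c unfolding Dm_def by auto
  next
    case (mv x a0)
    have "ahead inp a0 (x#b) d e"
    proof -
      consider "d \<in> set b" "e \<in> set b \<union> set a \<union> set inp" | "d \<in> set a" "e \<in> set a \<union> set inp"
        | u v where "inp = u @ d # v" "e \<in> set v" using ah unfolding ahead_def by blast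
      then show ?thesis
      proof cases
        case 1
        have "e \<noteq> x" using mv(2) sw_gt_hd[OF sb 1(1)] c 1 by auto
        then show ?thesis using 1 mv unfolding ahead_def by auto
      next
        case 2
        have "x \<ge> d" using sw_gt_hd[OF sa 2(1)] mv by simp
        then have "e \<noteq> x" using c by auto
        then show ?thesis using 2 mv unfolding ahead_def by auto
      next
        case 3 then show ?thesis unfolding ahead_def by blast
      qed
    qed
    then show ?thesis using mv c unfolding Dm_def by auto
  next
    case (tk x b0)
    have hI: "hd I \<le> c" using sw_lt_hd[OF sI c(1)] .
    have "ahead inp a b0 d e"
    proof -
      consider "d \<in> set b" "e \<in> set b \<union> set a \<union> set inp" | "d \<in> set a" "e \<in> set a \<union> set inp"
        | u v where "inp = u @ d # v" "e \<in> set v" using ah unfolding ahead_def by blast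
      then show ?thesis
      proof cases
        case 1
        have "d \<noteq> x" using tk(2) hI c by auto
        moreover have "e \<noteq> x" using sw_gt_hd[OF sb 1(1)] tk(1) c by auto
        ultimately show ?thesis using 1 tk unfolding ahead_def by auto
      next
        case 2 then show ?thesis unfolding ahead_def by blast
      next
        case 3 then show ?thesis unfolding ahead_def by blast
      qed
    qed
    then show ?thesis using tk c unfolding Dm_def by auto
  next
    case (ot x I0)
    show ?thesis
    proof (cases "c = x")
      case True
      have "e \<in> set inp \<union> set a \<union> set b" using ahead_set[OF ah] .
      moreover have "x \<in> set out'" "e \<le> x" using ot True c by auto
      ultimately have "G1 inp' a' b' I' out'" using ot unfolding G1_def by blast
      then show ?thesis ..
    next
      case False
      then show ?thesis using ot c ah unfolding Dm_def by auto
    qed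
  qed
qed

lemma bad_step: "inv2 \<pi> s \<Longrightarrow> mstep 2 s t \<Longrightarrow> bad s \<Longrightarrow> bad t"
proof -
  assume h: "inv2 \<pi> s" "mstep 2 s t" "bad s"
  then obtain inp a b I out where s: "s = (inp,[a,b],I,out)" "G1 inp a b I out \<or> Dm inp a b I"
    unfolding bad_def by blast
  from h(2) s(1) have "inv2 \<pi> t" using inv2_step h(1) by blast
  then obtain inp' a' b' I' out' where t: "t = (inp',[a',b'],I',out')" unfolding inv2_def by blast
  show ?thesis using s G1_step[of \<pi> inp a b I out inp' a' b' I' out'] Dm_step[of \<pi> inp a b I out inp' a' b' I' out']
      h t unfolding bad_def by auto
qed



abbreviation R0 :: "nat list" where "R0 \<equiv> [1,5,2]"

definition Good :: "nat \<Rightarrow> mstate \<Rightarrow> bool" where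
  "Good j s \<longleftrightarrow>
   s = (alpha j, [[],[]], [], []) \<or>
   s = (3 # omega j @ R0, [[2*j+4],[]], [], []) \<or>
   s = (3 # omega j @ R0, [[],[2*j+4]], [], []) \<or>
   (\<exists>i\<le>j. s = (omega i @ R0, [[3],[2*i+4]], [2*i+6..<2*j+6], [])) \<or>
   (\<exists>k<j. s = ((2*k+7) # omega k @ R0, [[2*k+4,3],[2*k+6]], [2*k+8..<2*j+6], [])
     \<or> s = (omega k @ R0, [[2*k+7,2*k+4,3],[2*k+6]], [2*k+8..<2*j+6], [])
     \<or> s = (omega k @ R0, [[2*k+4,3],[2*k+7,2*k+6]], [2*k+8..<2*j+6], [])
     \<or> s = (omega k @ R0, [[2*k+4,3],[2*k+6]], (2*k+7) # [2*k+8..<2*j+6], [])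
     \<or> s = (omega k @ R0, [[2*k+4,3],[]], (2*k+6) # (2*k+7) # [2*k+8..<2*j+6], []))"

lemma bad_G1: "y \<in> set inp \<Longrightarrow> y \<le> x \<Longrightarrow> bad (inp,[a,b],I,[x])"
  unfolding bad_def G1_def by auto
lemma bad_Dm: "c \<in> set I \<Longrightarrow> c<d \<Longrightarrow> e<c \<Longrightarrow> ahead inp a b d e \<Longrightarrow> bad (inp,[a,b],I,out)"
  unfolding bad_def Dm_def by blast
lemma bad_Dm_inp: "c \<in> set I \<Longrightarrow> c<d \<Longrightarrow> e<c \<Longrightarrow> inp = u @ d # v \<Longrightarrow> e \<in> set v \<Longrightarrow> bad (inp,[a,b],I,out)"
  by (rule bad_Dm[of c I d e]) (auto simp: ahead_def)
lemma bad_Dm_a: "c \<in> set I \<Longrightarrow> c<d \<Longrightarrow> e<c \<Longrightarrow> d \<in> set a \<Longrightarrow> e \<in> set inp \<Longrightarrow> bad (inp,[a,b],I,out)"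
  by (rule bad_Dm[of c I d e]) (auto simp: ahead_def)

lemma om_split: "\<exists>u v. omega i @ R0 = u @ (2*i+5) # v \<and> 2 \<in> set v"
proof (cases i)
  case 0 then show ?thesis by (intro exI[of _ "[1]"] exI[of _ "[2]"]) simp
next
  case (Suc m) then show ?thesis
    by (intro exI[of _ "[2*m+4]"] exI[of _ "omega m @ R0"]) (simp add: omega_Suc)
qed

lemma om_hd: "\<exists>h r. omega k @ R0 = h # r \<and> h \<le> 2*k+2"
proof (cases k)
  case 0 then show ?thesis by simp
next
  case (Suc m) then show ?thesis by (simp add: omega_Suc)
qed

lemma upt_hd: "[a..<b] = [] \<or> hd [a..<b] = a"
  by (cases "a<b") (auto simp: upt_conv_Cons)

lemma Good_T1: "i \<le> j \<Longrightarrow> Good j (omega i @ R0, [[3],[2*i+4]], [2*i+6..<2*j+6], [])"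
  unfolding Good_def by (rule disjI2, rule disjI2, rule disjI2, rule disjI1) auto
lemma Good_T2: "k < j \<Longrightarrow> Good j ((2*k+7) # omega k @ R0, [[2*k+4,3],[2*k+6]], [2*k+8..<2*j+6], [])"
  unfolding Good_def by (rule disjI2, rule disjI2, rule disjI2, rule disjI2, rule exI[of _ k], rule conjI, assumption, rule disjI1) simp
lemma Good_T3: "k < j \<Longrightarrow> Good j (omega k @ R0, [[2*k+7,2*k+4,3],[2*k+6]], [2*k+8..<2*j+6], [])"
  unfolding Good_def by (rule disjI2, rule disjI2, rule disjI2, rule disjI2, rule exI[of _ k], rule conjI, assumption, rule disjI2, rule disjI1) simp
lemma Good_T4: "k < j \<Longrightarrow> Good j (omega k @ R0, [[2*k+4,3],[2*k+7,2*k+6]], [2*k+8..<2*j+6], [])"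
  unfolding Good_def by (rule disjI2, rule disjI2, rule disjI2, rule disjI2, rule exI[of _ k], rule conjI, assumption, rule disjI2, rule disjI2, rule disjI1) simp
lemma Good_T5: "k < j \<Longrightarrow> Good j (omega k @ R0, [[2*k+4,3],[2*k+6]], (2*k+7) # [2*k+8..<2*j+6], [])"
  unfolding Good_def by (rule disjI2, rule disjI2, rule disjI2, rule disjI2, rule exI[of _ k], rule conjI, assumption, rule disjI2, rule disjI2, rule disjI2, rule disjI1) simp
lemma Good_T6: "k < j \<Longrightarrow> Good j (omega k @ R0, [[2*k+4,3],[]], (2*k+6) # (2*k+7) # [2*k+8..<2*j+6], [])"
  unfolding Good_def by (rule disjI2, rule disjI2, rule disjI2, rule disjI2, rule exI[of _ k], rule conjI, assumption, rule disjI2, rule disjI2, rule disjI2, rule disjI2) simp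

lemma gS0: "mstep 2 (alpha j, [[],[]], [], []) t \<Longrightarrow> Good j t \<or> bad t"
  unfolding alpha_eq by (cases rule: mstep2E) (auto simp: Good_def)

lemma gS1: "mstep 2 (3 # omega j @ R0, [[2*j+4],[]], [], []) t \<Longrightarrow> Good j t \<or> bad t"
  by (cases rule: mstep2E) (auto simp: Good_def)

lemma gS2: assumes "mstep 2 (3 # omega j @ R0, [[],[2*j+4]], [], []) t" shows "Good j t \<or> bad t"
  using assms
proof (cases rule: mstep2E)
  case (rd x inp0) then show ?thesis by (auto simp: Good_def)
next
  case (tk x b0)
  obtain u v where uv: "omega j @ R0 = u @ (2*j+5) # v" "2 \<in> set v" using om_split by blast
  have "bad (3 # omega j @ R0, [[],[]], [2*j+4], [])"
    by (rule bad_Dm_inp[of "2*j+4" _ "2*j+5" 2 _ "3#u" v]) (use uv in auto)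
  then show ?thesis using tk by simp
qed auto

lemma gT1: assumes "i \<le> j" "mstep 2 (omega i @ R0, [[3],[2*i+4]], [2*i+6..<2*j+6], []) t"
  shows "Good j t \<or> bad t"
  using assms(2)
proof (cases rule: mstep2E)
  case (rd x inp0)
  show ?thesis
  proof (cases i)
    case 0 then show ?thesis using rd by simp
  next
    case (Suc k)
    have teq: "t = ((2*k+7) # omega k @ R0, [[2*k+4,3],[2*k+6]], [2*k+8..<2*j+6], [])"
      using rd Suc by (simp add: omega_Suc add.commute)
    have "Good j t" unfolding teq by (rule Good_T2) (use Suc assms(1) in simp)
    then show ?thesis ..
  qed
next
  case (mv x a0) then show ?thesis by simp
next
  case (tk x b0)
  obtain u v where uv: "omega i @ R0 = u @ (2*i+5) # v" "2 \<in> set v" using om_split by blast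
  have "bad (omega i @ R0, [[3],[]], (2*i+4) # [2*i+6..<2*j+6], [])"
    by (rule bad_Dm_inp[of "2*i+4" _ "2*i+5" 2 _ u v]) (use uv in auto)
  then show ?thesis using tk by simp
next
  case (ot x I0)
  have "x \<in> set [2*i+6..<2*j+6]" using ot(1) by (metis list.set_intros(1))
  then have "bad (omega i @ R0, [[3],[2*i+4]], I0, [x])" by (intro bad_G1[of 1]) auto
  then show ?thesis using ot by simp
qed


lemma ot_bad: "1 \<in> set inp \<Longrightarrow> (1::nat) \<le> x \<Longrightarrow> bad (inp,[a,b],I0,[] @ [x])"
  using bad_G1[of 1 inp x a b I0] by simp

lemma om_one: "1 \<in> set (omega k @ R0)" by simp

lemma om_blk: assumes "omega k @ R0 = x # r" shows "x \<le> 2*k+2"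
  using om_hd[of k] assms by auto

lemma gT2: assumes "k < j" "mstep 2 ((2*k+7) # omega k @ R0, [[2*k+4,3],[2*k+6]], [2*k+8..<2*j+6], []) t"
  shows "Good j t \<or> bad t"
  using assms(2)
proof (cases rule: mstep2E)
  case (rd x inp0) then show ?thesis using Good_T3[OF assms(1)] by simp
next
  case (mv x a0) then show ?thesis by simp
next
  case (tk x b0)
  have "bad ((2*k+7) # omega k @ R0, [[2*k+4,3],[]], (2*k+6) # [2*k+8..<2*j+6], [])"
    by (rule bad_Dm_inp[of "2*k+6" _ "2*k+7" 2 _ "[]" "omega k @ R0"]) auto
  then show ?thesis using tk by simp
next
  case (ot x I0)
  have "x \<in> set [2*k+8..<2*j+6]" using ot(1) by (metis list.set_intros(1))
  then have "bad ((2*k+7) # omega k @ R0, [[2*k+4,3],[2*k+6]], I0, [] @ [x])" by (intro ot_bad) auto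
  then show ?thesis using ot by simp
qed

lemma gT3: assumes "k < j" "mstep 2 (omega k @ R0, [[2*k+7,2*k+4,3],[2*k+6]], [2*k+8..<2*j+6], []) t"
  shows "Good j t \<or> bad t"
  using assms(2)
proof (cases rule: mstep2E)
  case (rd x inp0) then show ?thesis using om_blk[of k x inp0] by simp
next
  case (mv x a0) then show ?thesis using Good_T4[OF assms(1)] by simp
next
  case (tk x b0)
  have "bad (omega k @ R0, [[2*k+7,2*k+4,3],[]], (2*k+6) # [2*k+8..<2*j+6], [])"
    by (rule bad_Dm_a[of "2*k+6" _ "2*k+7" 2]) auto
  then show ?thesis using tk by simp
next
  case (ot x I0)
  have "x \<in> set [2*k+8..<2*j+6]" using ot(1) by (metis list.set_intros(1))
  then have "bad (omega k @ R0, [[2*k+7,2*k+4,3],[2*k+6]], I0, [] @ [x])" by (intro ot_bad) auto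
  then show ?thesis using ot by simp
qed

lemma gT4: assumes "k < j" "mstep 2 (omega k @ R0, [[2*k+4,3],[2*k+7,2*k+6]], [2*k+8..<2*j+6], []) t"
  shows "Good j t \<or> bad t"
  using assms(2)
proof (cases rule: mstep2E)
  case (rd x inp0) then show ?thesis using om_blk[of k x inp0] by simp
next
  case (mv x a0) then show ?thesis by simp
next
  case (tk x b0) then show ?thesis using Good_T5[OF assms(1)] by simp
next
  case (ot x I0)
  have "x \<in> set [2*k+8..<2*j+6]" using ot(1) by (metis list.set_intros(1))
  then have "bad (omega k @ R0, [[2*k+4,3],[2*k+7,2*k+6]], I0, [] @ [x])" by (intro ot_bad) auto
  then show ?thesis using ot by simp
qed

lemma gT5: assumes "k < j" "mstep 2 (omega k @ R0, [[2*k+4,3],[2*k+6]], (2*k+7) # [2*k+8..<2*j+6], []) t"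
  shows "Good j t \<or> bad t"
  using assms(2)
proof (cases rule: mstep2E)
  case (rd x inp0) then show ?thesis using om_blk[of k x inp0] by simp
next
  case (mv x a0) then show ?thesis by simp
next
  case (tk x b0) then show ?thesis using Good_T6[OF assms(1)] by simp
next
  case (ot x I0)
  then have "bad (omega k @ R0, [[2*k+4,3],[2*k+6]], I0, [] @ [x])" by (intro ot_bad) auto
  then show ?thesis using ot by simp
qed

lemma upt2: "a+2 \<le> b \<Longrightarrow> a # (a+1) # [a+2..<b] = [a..<b]"
  by (simp add: upt_conv_Cons)

lemma gT6: assumes "k < j" "mstep 2 (omega k @ R0, [[2*k+4,3],[]], (2*k+6) # (2*k+7) # [2*k+8..<2*j+6], []) t"
  shows "Good j t \<or> bad t"
  using assms(2)
proof (cases rule: mstep2E)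
  case (rd x inp0) then show ?thesis using om_blk[of k x inp0] by simp
next
  case (mv x a0)
  have e: "(2*k+6) # (2*k+7) # [2*k+8..<2*j+6] = [2*k+6..<2*j+6]"
    using upt2[of "2*k+6" "2*j+6"] assms(1) by (simp add: add.commute)
  show ?thesis using mv Good_T1[of k j] assms(1) e by simp
next
  case (tk x b0) then show ?thesis by simp
next
  case (ot x I0)
  then have "bad (omega k @ R0, [[2*k+4,3],[]], I0, [] @ [x])" by (intro ot_bad) auto
  then show ?thesis using ot by simp
qed

lemma good_step: assumes G: "Good j s" and st: "mstep 2 s t" shows "Good j t \<or> bad t"
  using G st unfolding Good_def[of j s]
  apply (elim disjE exE conjE)
  apply (simp_all add: gS0 gS1 gS2 gT1 gT2 gT3 gT4 gT5 gT6)
  done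



lemma Good_inp: "Good j s \<Longrightarrow> fst s \<noteq> []"
  unfolding Good_def alpha_eq by auto

lemma not_sortable_alpha: "\<not> sortable 2 (alpha j)"
proof
  assume "sortable 2 (alpha j)"
  then obtain D I where r: "(mstep 2)\<^sup>*\<^sup>* (alpha j, replicate 2 [], [], []) ([], D, I, sort (alpha j))"
    unfolding sortable_def by blast
  have P: "inv2 (alpha j) s \<and> (Good j s \<or> bad s)"
    if "(mstep 2)\<^sup>*\<^sup>* (alpha j, replicate 2 [], [], []) s" for s
    using that
  proof (induction rule: rtranclp_induct)
    case base
    have "Good j (alpha j, [[],[]], [], [])" unfolding Good_def by simp
    then show ?case using inv2_init[OF distinct_alpha, of j] by (simp add: numeral_2_eq_2)
  next
    case (step y z)
    then show ?case using inv2_step good_step bad_step by blast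
  qed
  from P[OF r] have iv: "inv2 (alpha j) ([], D, I, sort (alpha j))"
    and gb: "Good j ([], D, I, sort (alpha j)) \<or> bad ([], D, I, sort (alpha j))" by auto
  from iv obtain a b where D: "D = [a,b]" and ms: "mset (a@b@I@sort (alpha j)) = mset (alpha j)"
    unfolding inv2_def by auto
  from ms have e: "a = [] \<and> b = [] \<and> I = []" by simp
  from gb show False
  proof
    assume "Good j ([], D, I, sort (alpha j))" then show False using Good_inp by fastforce
  next
    assume "bad ([], D, I, sort (alpha j))"
    then show False using e D unfolding bad_def G1_def Dm_def by auto
  qed
qed



definition smo :: "(nat \<Rightarrow> nat) \<Rightarrow> nat set \<Rightarrow> bool" where
  "smo f S \<longleftrightarrow> (\<forall>x\<in>S. \<forall>y\<in>S. x < y \<longrightarrow> f x < f y)"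

lemma smo_iff: "smo f S \<Longrightarrow> x \<in> S \<Longrightarrow> y \<in> S \<Longrightarrow> (f x < f y) = (x < y)"
  unfolding smo_def by (metis less_asym linorder_neqE_nat)

fun mapst :: "(nat \<Rightarrow> nat) \<Rightarrow> mstate \<Rightarrow> mstate" where
  "mapst f (inp,D,I,out) = (map f inp, map (map f) D, map f I, map f out)"

lemma relabel_step:
  assumes "inv2 \<pi> s" "mstep 2 s t" "smo f (set \<pi>)"
  shows "mstep 2 (mapst f s) (mapst f t)"
proof -
  from assms(1) obtain inp a b I out where s: "s = (inp,[a,b],I,out)" and
    ms: "mset (inp@a@b@I@out) = mset \<pi>" unfolding inv2_def by blast
  have sub: "set (inp@a@b@I@out) = set \<pi>" using ms by (metis set_mset_mset)
  have iff: "\<And>x y. x \<in> set (inp@a@b@I@out) \<Longrightarrow> y \<in> set (inp@a@b@I@out) \<Longrightarrow> (f x < f y) = (x < y)"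
    using smo_iff[OF assms(3)] sub by blast
  from assms(2)[unfolded s] show ?thesis
  proof (cases rule: mstep2E)
    case (rd x inp0)
    have "map f a = [] \<or> hd (map f a) < f x"
      using rd iff[of "hd a" x] by (cases a) auto
    then show ?thesis using rd s st_rd by simp
  next
    case (mv x a0)
    have "map f b = [] \<or> hd (map f b) < f x"
      using mv iff[of "hd b" x] by (cases b) auto
    then show ?thesis using mv s st_mv by simp
  next
    case (tk x b0)
    have "map f I = [] \<or> f x < hd (map f I)"
      using tk iff[of x "hd I"] by (cases I) auto
    then show ?thesis using tk s st_tk by simp
  next
    case (ot x I0) then show ?thesis using s st_ot by simp
  qed
qed

lemma sorted_map_smo: "sorted xs \<Longrightarrow> smo f (set xs) \<Longrightarrow> sorted (map f xs)"
  unfolding sorted_wrt_map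
  by (rule sorted_wrt_mono_rel[of _ "(\<le>)"]) (auto simp: smo_def order_le_less)

lemma sortable_relabel:
  assumes "distinct \<pi>" "smo f (set \<pi>)" "sortable 2 \<pi>"
  shows "sortable 2 (map f \<pi>)"
proof -
  from assms(3) obtain D I where r: "(mstep 2)\<^sup>*\<^sup>* (\<pi>, replicate 2 [], [], []) ([], D, I, sort \<pi>)"
    unfolding sortable_def by blast
  have P: "inv2 \<pi> s \<and> (mstep 2)\<^sup>*\<^sup>* (mapst f (\<pi>, replicate 2 [], [], [])) (mapst f s)"
    if "(mstep 2)\<^sup>*\<^sup>* (\<pi>, replicate 2 [], [], []) s" for s
    using that
  proof (induction rule: rtranclp_induct)
    case base then show ?case using inv2_init[OF assms(1)] by simp
  next
    case (step y z)
    then show ?case using inv2_step relabel_step[OF _ _ assms(2)]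
      by (meson rtranclp.rtrancl_into_rtrancl)
  qed
  have e: "map f (sort \<pi>) = sort (map f \<pi>)"
    by (rule properties_for_sort[symmetric]) (auto intro!: sorted_map_smo simp: assms(2))
  show ?thesis using P[OF r] e unfolding sortable_def by (auto simp: numeral_2_eq_2)
qed

lemma order_iso_distinct: assumes "order_iso xs ys" "distinct xs" shows "distinct ys"
  unfolding distinct_conv_nth
proof (intro allI impI)
  fix i j assume h: "i < length ys" "j < length ys" "i \<noteq> j"
  have len: "length xs = length ys" using assms(1) unfolding order_iso_def by simp
  have "xs ! i \<noteq> xs ! j" using assms(2) h len by (simp add: nth_eq_iff_index_eq)
  then have "xs ! i < xs ! j \<or> xs ! j < xs ! i" by auto
  then have "ys ! i < ys ! j \<or> ys ! j < ys ! i" using assms(1) h len unfolding order_iso_def by auto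
  then show "ys ! i \<noteq> ys ! j" by auto
qed

lemma order_iso_sym: "order_iso xs ys \<Longrightarrow> order_iso ys xs"
  unfolding order_iso_def by auto

lemma sortable_order_iso:
  assumes "order_iso xs ys" "distinct xs" "sortable 2 xs"
  shows "sortable 2 ys"
proof -
  define f where "f = (\<lambda>x. the (map_of (zip xs ys) x))"
  have len: "length xs = length ys" using assms(1) unfolding order_iso_def by simp
  have fn: "\<And>i. i < length xs \<Longrightarrow> f (xs ! i) = ys ! i"
    unfolding f_def using map_of_zip_nth[OF len assms(2)] len by simp
  have m: "map f xs = ys" by (rule nth_equalityI) (use len fn in auto)
  have "smo f (set xs)" unfolding smo_def
  proof (intro ballI impI)
    fix x y assume "x \<in> set xs" "y \<in> set xs" "x < y"
    then obtain i k where "i < length xs" "k < length xs" "x = xs ! i" "y = xs ! k"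
      by (metis in_set_conv_nth)
    then show "f x < f y" using assms(1) fn \<open>x<y\<close> unfolding order_iso_def by auto
  qed
  then show ?thesis using sortable_relabel[OF assms(2) _ assms(3), of f] m by simp
qed

lemma order_iso_standardize: "order_iso xs (standardize xs)"
proof -
  have A1: "card {y \<in> set xs. y \<le> x} < card {y \<in> set xs. y \<le> z}"
    if "x < z" "z \<in> set xs" for x z
  proof (rule psubset_card_mono)
    show "{y \<in> set xs. y \<le> x} \<subset> {y \<in> set xs. y \<le> z}"
    proof
      show "{y \<in> set xs. y \<le> x} \<subseteq> {y \<in> set xs. y \<le> z}" using that by auto
      have "z \<in> {y \<in> set xs. y \<le> z}" "z \<notin> {y \<in> set xs. y \<le> x}" using that by auto
      then show "{y \<in> set xs. y \<le> x} \<noteq> {y \<in> set xs. y \<le> z}" by blast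
    qed
  qed simp
  have A2: "card {y \<in> set xs. y \<le> z} \<le> card {y \<in> set xs. y \<le> x}"
    if "z \<le> x" for x z
    by (rule card_mono) (use that in auto)
  show ?thesis unfolding order_iso_def standardize_def
  proof (intro conjI allI impI)
    fix i k assume "i < length xs" "k < length xs"
    then have m: "xs ! k \<in> set xs" "xs ! i \<in> set xs" by auto
    show "(xs ! i < xs ! k) = (map (\<lambda>x. card {y \<in> set xs. y \<le> x}) xs ! i < map (\<lambda>x. card {y \<in> set xs. y \<le> x}) xs ! k)"
      using A1[OF _ m(1), of "xs ! i"] A2[of "xs ! k" "xs ! i"] \<open>i < length xs\<close> \<open>k < length xs\<close>
      by (auto simp: not_less) (meson not_le_imp_less)
  qed simp
qed



fun filtst :: "(nat \<Rightarrow> bool) \<Rightarrow> mstate \<Rightarrow> mstate" where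
  "filtst P (inp,D,I,out) = (filter P inp, map (filter P) D, filter P I, filter P out)"

lemma hd_filter_in: "filter P a \<noteq> [] \<Longrightarrow> hd (filter P a) \<in> set a"
  using hd_in_set[of "filter P a"] by auto

lemma filt_step:
  assumes "inv2 \<pi> s" "mstep 2 s t"
  shows "filtst P s = filtst P t \<or> mstep 2 (filtst P s) (filtst P t)"
proof -
  from assms(1) obtain inp a b I out where s: "s = (inp,[a,b],I,out)" and
    sa: "sorted_wrt (>) a" and sb: "sorted_wrt (>) b" and sI: "sorted_wrt (<) I"
    unfolding inv2_def by blast
  from assms(2)[unfolded s] show ?thesis
  proof (cases rule: mstep2E)
    case (rd x inp0)
    show ?thesis
    proof (cases "P x")
      case True
      have "filter P a = [] \<or> hd (filter P a) < x"
        using rd(2) hd_filter_in[of P a] sw_gt_hd[OF sa] by fastforce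
      then show ?thesis using rd s True st_rd by simp
    next
      case False then show ?thesis using rd s by simp
    qed
  next
    case (mv x a0)
    show ?thesis
    proof (cases "P x")
      case True
      have "filter P b = [] \<or> hd (filter P b) < x"
        using mv(2) hd_filter_in[of P b] sw_gt_hd[OF sb] by fastforce
      then show ?thesis using mv s True st_mv by simp
    next
      case False then show ?thesis using mv s by simp
    qed
  next
    case (tk x b0)
    show ?thesis
    proof (cases "P x")
      case True
      have "filter P I = [] \<or> x < hd (filter P I)"
        using tk(2) hd_filter_in[of P I] sw_lt_hd[OF sI] by fastforce
      then show ?thesis using tk s True st_tk by simp
    next
      case False then show ?thesis using tk s by simp
    qed
  next
    case (ot x I0)
    show ?thesis
    proof (cases "P x")
      case True then show ?thesis using ot s st_ot by simp
    next
      case False then show ?thesis using ot s by simp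
    qed
  qed
qed

lemma sortable_filter:
  assumes "distinct \<pi>" "sortable 2 \<pi>"
  shows "sortable 2 (filter P \<pi>)"
proof -
  from assms(2) obtain D I where r: "(mstep 2)\<^sup>*\<^sup>* (\<pi>, replicate 2 [], [], []) ([], D, I, sort \<pi>)"
    unfolding sortable_def by blast
  have Q: "inv2 \<pi> s \<and> (mstep 2)\<^sup>*\<^sup>* (filtst P (\<pi>, replicate 2 [], [], [])) (filtst P s)"
    if "(mstep 2)\<^sup>*\<^sup>* (\<pi>, replicate 2 [], [], []) s" for s
    using that
  proof (induction rule: rtranclp_induct)
    case base then show ?case using inv2_init[OF assms(1)] by simp
  next
    case (step y z)
    then have "inv2 \<pi> z" using inv2_step by blast
    moreover have "(mstep 2)\<^sup>*\<^sup>* (filtst P (\<pi>, replicate 2 [], [], [])) (filtst P z)"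
      using step filt_step[of \<pi> y z P]
      by (metis rtranclp.rtrancl_into_rtrancl)
    ultimately show ?case by blast
  qed
  show ?thesis using Q[OF r] unfolding sortable_def
    by (auto simp: numeral_2_eq_2 filter_sort)
qed

lemma subseq_filter: "subseq xs ys \<Longrightarrow> distinct ys \<Longrightarrow> xs = filter (\<lambda>x. x \<in> set xs) ys"
  by (metis filter_in_nths subseq_conv_nths)

lemma delete_at_filter: "distinct xs \<Longrightarrow> p < length xs \<Longrightarrow> delete_at p xs = filter (\<lambda>x. x \<noteq> xs ! p) xs"
proof -
  assume d: "distinct xs" and p: "p < length xs"
  have e: "xs = take p xs @ xs ! p # drop (Suc p) xs" using id_take_nth_drop[OF p] .
  have "distinct (take p xs @ xs ! p # drop (Suc p) xs)" using d e by simp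
  then have "xs ! p \<notin> set (take p xs)" "xs ! p \<notin> set (drop (Suc p) xs)" by auto
  then have "filter (\<lambda>x. x \<noteq> xs ! p) (take p xs @ xs ! p # drop (Suc p) xs) = take p xs @ drop (Suc p) xs"
  proof -
    have "filter (\<lambda>x. x \<noteq> xs ! p) (take p xs) = take p xs" by (rule filter_True) (use \<open>xs ! p \<notin> set (take p xs)\<close> in auto)
    moreover have "filter (\<lambda>x. x \<noteq> xs ! p) (drop (Suc p) xs) = drop (Suc p) xs" by (rule filter_True) (use \<open>xs ! p \<notin> set (drop (Suc p) xs)\<close> in auto)
    ultimately show ?thesis by simp
  qed
  then show ?thesis unfolding delete_at_def using e by metis
qed



abbreviation ms :: "mstate \<Rightarrow> mstate \<Rightarrow> bool" where "ms \<equiv> (mstep 2)\<^sup>*\<^sup>*"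

lemma rdR: "a = [] \<or> hd a < x \<Longrightarrow> ms (inp, [x#a,b], I, out) u \<Longrightarrow> ms (x#inp, [a,b], I, out) u"
  by (rule converse_rtranclp_into_rtranclp[of "mstep 2", OF st_rd])
lemma mvR: "b = [] \<or> hd b < x \<Longrightarrow> ms (inp,[a,x#b],I,out) u \<Longrightarrow> ms (inp,[x#a,b],I,out) u"
  by (rule converse_rtranclp_into_rtranclp[of "mstep 2", OF st_mv])
lemma tkR: "I = [] \<or> x < hd I \<Longrightarrow> ms (inp,[a,b],x#I,out) u \<Longrightarrow> ms (inp,[a,x#b],I,out) u"
  by (rule converse_rtranclp_into_rtranclp[of "mstep 2", OF st_tk])
lemma otR: "ms (inp,[a,b],I,out@[x]) u \<Longrightarrow> ms (inp,[a,b],x#I,out) u"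
  by (rule converse_rtranclp_into_rtranclp[of "mstep 2", OF st_ot])

lemma flushR: "ms (inp,[a,b],[],out@I) u \<Longrightarrow> ms (inp,[a,b],I,out) u"
proof (induction I arbitrary: out)
  case Nil then show ?case by simp
next
  case (Cons x I) then show ?case by (intro otR) simp
qed

lemma run_sortable:
  assumes "ms (\<pi>,[[],[]],[],[]) ([],[[],[]],[],out)" "sorted out" "distinct \<pi>"
  shows "sortable 2 \<pi>"
proof -
  have "inv2 \<pi> ([],[[],[]],[],out)"
    using inv2_reach[OF assms(1)] inv2_init[OF assms(3)] by (simp add: numeral_2_eq_2)
  then have "mset out = mset \<pi>" unfolding inv2_def by auto
  then have "sort \<pi> = out" using assms(2) by (rule properties_for_sort)
  then show ?thesis using assms(1) unfolding sortable_def by (auto simp: numeral_2_eq_2)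
qed

definition hi :: "nat \<Rightarrow> nat \<Rightarrow> nat list" where
  "hi k i = concat (map (\<lambda>k. [2*k+2, 2*k+5]) (rev [Suc i..<Suc k]))"

lemma hi_same[simp]: "hi i i = []" by (simp add: hi_def)
lemma hi_Suc: "i \<le> k \<Longrightarrow> hi (Suc k) i = [2*k+4, 2*k+7] @ hi k i"
  by (simp add: hi_def)
lemma omega_hi: "omega k = hi k 0" by (simp add: hi_def omega_def)
lemma hi_split: "i \<le> k \<Longrightarrow> hi k 0 = hi k i @ hi i 0"
proof (induction k)
  case 0 then show ?case by simp
next
  case (Suc k)
  show ?case
  proof (cases "i = Suc k")
    case True then show ?thesis by simp
  next
    case False then show ?thesis using Suc by (simp add: hi_Suc)
  qed
qed
lemma length_hi: "i \<le> k \<Longrightarrow> length (hi k i) = 2*(k-i)"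
proof (induction k)
  case 0 then show ?case by simp
next
  case (Suc k)
  show ?case
  proof (cases "i = Suc k")
    case True then show ?thesis by simp
  next
    case False then show ?thesis using Suc by (simp add: hi_Suc)
  qed
qed

lemma loop:
  assumes "X = [] \<or> hd X < 4" "Y = [] \<or> hd Y < 4" "Z = [] \<or> B \<le> hd Z"
  shows "i \<le> k \<Longrightarrow> 2*k+6 \<le> B \<Longrightarrow> ms (hi k i @ Rs, [(2*k+4)#X, Y], [2*k+6..<B] @ Z, out)
             (Rs, [(2*i+4)#X, Y], [2*i+6..<B] @ Z, out)"
proof (induction k)
  case 0 then show ?case by simp
next
  case (Suc k)
  show ?case
  proof (cases "i = Suc k")
    case True then show ?thesis by simp
  next
    case False
    then have ik: "i \<le> k" using Suc.prems by simp
    have h: "hi (Suc k) i @ Rs = (2*k+4) # (2*k+7) # (hi k i @ Rs)"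
      using ik by (simp add: hi_Suc)
    have e1: "2 * Suc k + 4 = 2*k+6" "2 * Suc k + 6 = 2*k+8" by simp_all
    have I: "[2*k+8..<B] @ Z = [] \<or> 2*k+7 < hd ([2*k+8..<B] @ Z)"
      using Suc.prems assms(3) by (cases "2*k+8 < B") (auto simp: upt_conv_Cons)
    have I2: "[2*k+6..<B] = (2*k+6) # (2*k+7) # [2*k+8..<B]"
      using Suc.prems upt2[of "2*k+6" B] by (simp add: add.commute)
    have IH: "ms (hi k i @ Rs, [(2*k+4)#X, Y], [2*k+6..<B] @ Z, out) (Rs, [(2*i+4)#X, Y], [2*i+6..<B] @ Z, out)"
      using Suc ik by simp
    show ?thesis
      unfolding h e1
      apply (rule mvR, use assms(2) in force)
      apply (rule rdR, use assms(1) in force)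
      apply (rule rdR, simp)
      apply (rule mvR, simp)
      apply (rule tkR, use I in simp)
      apply (rule tkR, simp)
      using IH unfolding I2 by simp
  qed
qed



lemma fin: "ms ([],[[],[]],[],out) ([],[[],[]],[],out)" by simp

lemma E1: "Ifin = [] \<or> 5 < hd Ifin \<Longrightarrow> ms ([5,2], [[4,3],[]], Ifin, []) ([],[[],[]],[], [2,3,4,5] @ Ifin)"
  apply (rule mvR, simp)
  apply (rule rdR, simp)
  apply (rule mvR, simp)
  apply (rule tkR, force)
  apply (rule tkR, simp)
  apply (rule mvR, simp)
  apply (rule tkR, simp)
  apply (rule rdR, simp)
  apply (rule mvR, simp)
  apply (rule tkR, simp)
  apply (rule flushR)
  apply simp
  done

lemma E5: "Ifin = [] \<or> 4 < hd Ifin \<Longrightarrow> ms ([1,2], [[4,3],[]], Ifin, []) ([],[[],[]],[], [1,2,3,4] @ Ifin)"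
  apply (rule mvR, simp)
  apply (rule tkR, force)
  apply (rule mvR, simp)
  apply (rule tkR, simp)
  apply (rule rdR, simp)
  apply (rule mvR, simp)
  apply (rule tkR, simp)
  apply (rule otR)
  apply (rule rdR, simp)
  apply (rule mvR, simp)
  apply (rule tkR, simp)
  apply (rule flushR)
  apply simp
  done

lemma E2: "Ifin = [] \<or> 5 < hd Ifin \<Longrightarrow> ms ([1,5], [[4,3],[]], Ifin, []) ([],[[],[]],[], [1,3,4,5] @ Ifin)"
  apply (rule mvR, simp)
  apply (rule tkR, force)
  apply (rule mvR, simp)
  apply (rule tkR, simp)
  apply (rule rdR, simp)
  apply (rule mvR, simp)
  apply (rule tkR, simp)
  apply (rule otR, rule otR, rule otR)
  apply (rule rdR, simp)
  apply (rule mvR, simp)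
  apply (rule tkR, simp)
  apply (rule flushR)
  apply simp
  done

lemma E3a: "Ifin = [] \<or> 5 < hd Ifin \<Longrightarrow> ms ([1,5,2], [[4],[3]], Ifin, []) ([],[[],[]],[], [1,2,3,4,5] @ Ifin)"
  apply (rule mvR, simp)
  apply (rule rdR, simp)
  apply (rule rdR, simp)
  apply (rule mvR, simp)
  apply (rule tkR, force)
  apply (rule tkR, simp)
  apply (rule tkR, simp)
  apply (rule mvR, simp)
  apply (rule tkR, simp)
  apply (rule otR)
  apply (rule rdR, simp)
  apply (rule mvR, simp)
  apply (rule tkR, simp)
  apply (rule flushR)
  apply simp
  done

lemma E3b: "Ifin = [] \<or> 5 < hd Ifin \<Longrightarrow> ms ([1,5,2], [[4],[]], Ifin, []) ([],[[],[]],[], [1,2,4,5] @ Ifin)"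
  apply (rule mvR, simp)
  apply (rule rdR, simp)
  apply (rule rdR, simp)
  apply (rule mvR, simp)
  apply (rule tkR, force)
  apply (rule tkR, simp)
  apply (rule mvR, simp)
  apply (rule tkR, simp)
  apply (rule otR)
  apply (rule rdR, simp)
  apply (rule mvR, simp)
  apply (rule tkR, simp)
  apply (rule flushR)
  apply simp
  done

lemma E4: "Ifin = [] \<or> 5 < hd Ifin \<Longrightarrow> ms ([1,5,2], [[],[3]], Ifin, []) ([],[[],[]],[], [1,2,3,5] @ Ifin)"
  apply (rule rdR, simp)
  apply (rule rdR, simp)
  apply (rule mvR, simp)
  apply (rule tkR, force)
  apply (rule tkR, simp)
  apply (rule mvR, simp)
  apply (rule tkR, simp)
  apply (rule otR)
  apply (rule rdR, simp)
  apply (rule mvR, simp)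
  apply (rule tkR, simp)
  apply (rule flushR)
  apply simp
  done

lemma sStd: "ms ((2*q+6) # 3 # (2*q+4) # (2*q+7) # Rs, [[],[]], [], []) (Rs, [[2*q+4,3],[]], [2*q+6..<2*q+8], [])"
  apply (rule rdR, simp)
  apply (rule mvR, simp)
  apply (rule rdR, simp)
  apply (rule rdR, simp)
  apply (rule rdR, simp)
  apply (rule mvR, simp)
  apply (rule tkR, simp)
  apply (rule tkR, simp)
  apply (simp add: upt_conv_Cons add.commute)
  done

lemma sA: "ms (3 # (2*q+4) # (2*q+7) # Rs, [[],[]], [], []) (Rs, [[2*q+4],[3]], [2*q+7], [])"
  apply (rule rdR, simp)
  apply (rule mvR, simp)
  apply (rule rdR, simp)
  apply (rule rdR, simp)
  apply (rule mvR, simp)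
  apply (rule tkR, simp)
  apply simp
  done

lemma s3: "ms ((2*q+6) # (2*q+4) # (2*q+7) # Rs, [[],[]], [], []) (Rs, [[2*q+4],[]], [2*q+6..<2*q+8], [])"
  apply (rule rdR, simp)
  apply (rule mvR, simp)
  apply (rule rdR, simp)
  apply (rule rdR, simp)
  apply (rule mvR, simp)
  apply (rule tkR, simp)
  apply (rule tkR, simp)
  apply (simp add: upt_conv_Cons add.commute)
  done

lemma sF: "ms ((2*q+6) # 3 # (2*q+7) # Rs, [[],[]], [], []) (Rs, [[],[3]], [2*q+6..<2*q+8], [])"
  apply (rule rdR, simp)
  apply (rule mvR, simp)
  apply (rule rdR, simp)
  apply (rule rdR, simp)
  apply (rule mvR, simp)
  apply (rule tkR, simp)
  apply (rule tkR, simp)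
  apply (rule mvR, simp)
  apply (simp add: upt_conv_Cons add.commute)
  done

lemma sG: "ms ((2*q+6) # 3 # (2*q+4) # Rs, [[],[]], [], []) (Rs, [[2*q+4],[3]], [2*q+6], [])"
  apply (rule rdR, simp)
  apply (rule mvR, simp)
  apply (rule tkR, simp)
  apply (rule rdR, simp)
  apply (rule mvR, simp)
  apply (rule rdR, simp)
  apply simp
  done

lemma bF: "r < q \<Longrightarrow> ms ((2*r+7) # Rs, [[2*r+6,3],[]], [2*r+8..<2*q+8], []) (Rs, [[],[3]], [2*r+6..<2*q+8], [])"
  apply (rule mvR, simp)
  apply (rule rdR, simp)
  apply (rule mvR, simp)
  apply (rule tkR, simp add: upt_conv_Cons)
  apply (rule tkR, simp)
  apply (rule mvR, simp)
  apply (simp add: upt_conv_Cons add.commute)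
  done

lemma bG: "r < q \<Longrightarrow> ms ((2*r+4) # Rs, [[2*r+6,3],[]], [2*r+8..<2*q+8], []) (Rs, [[2*r+4],[3]], (2*r+6) # [2*r+8..<2*q+8], [])"
  apply (rule mvR, simp)
  apply (rule tkR, simp add: upt_conv_Cons)
  apply (rule mvR, simp)
  apply (rule rdR, simp)
  apply simp
  done

lemma fS: "s < q \<Longrightarrow> ms ((2*s+4) # (2*s+7) # Rs, [[],[3]], [2*s+8..<2*q+8], []) (Rs, [[2*s+4],[3]], (2*s+7) # [2*s+8..<2*q+8], [])"
  apply (rule rdR, simp)
  apply (rule rdR, simp)
  apply (rule mvR, simp)
  apply (rule tkR, simp add: upt_conv_Cons)
  apply simp
  done



definition ok :: "mstate \<Rightarrow> bool" where
  "ok s \<longleftrightarrow> (\<exists>out. ms s ([],[[],[]],[],out) \<and> sorted out)"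

lemma ok_pre: "ms s t \<Longrightarrow> ok t \<Longrightarrow> ok s"
  unfolding ok_def by (meson rtranclp_trans)
lemma ok_end: "ms s ([],[[],[]],[],out) \<Longrightarrow> sorted out \<Longrightarrow> ok s"
  unfolding ok_def by blast

lemma loop0: assumes "X = [] \<or> hd X < 4" "Y = [] \<or> hd Y < 4" "Z = [] \<or> B \<le> hd Z" "2*k+6 \<le> B"
  shows "ms (omega k @ Rs, [(2*k+4)#X, Y], [2*k+6..<B] @ Z, out) (Rs, [4#X, Y], [6..<B] @ Z, out)"
  using loop[OF assms(1-3), of 0 k Rs out] assms(4) by (simp add: omega_hi)

lemma okE3a: "ok ([1,5,2], [[4],[3]], [6..<B] @ Z, [])" if "Z = [] \<or> B \<le> hd Z" "sorted Z" "6 \<le> B"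
proof -
  have "[6..<B] @ Z = [] \<or> 5 < hd ([6..<B] @ Z)"
    using that by (cases "6 < B") (auto simp: upt_conv_Cons)
  moreover have "\<forall>z\<in>set Z. B \<le> z" using that by (cases Z) auto
  then have "sorted ([1,2,3,4,5] @ [6..<B] @ Z)"
    using that by (auto simp: sorted_append)
  ultimately show ?thesis using E3a ok_end by blast
qed

lemma ok_tail_gen: assumes h: "ok (Rs, [[4,3],[]], [6..<2*q+8], [])"
  shows "ok ((2*q+6) # 3 # (2*q+4) # (2*q+7) # omega q @ Rs, [[],[]], [], [])"
proof -
  have "ms (omega q @ Rs, [[2*q+4,3],[]], [2*q+6..<2*q+8] @ [], []) (Rs, [[4,3],[]], [6..<2*q+8] @ [], [])"
    by (rule loop0) auto
  then have "ok (omega q @ Rs, [[2*q+4,3],[]], [2*q+6..<2*q+8], [])" using ok_pre h by simp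
  then show ?thesis by (rule ok_pre[OF sStd])
qed

lemma ok_tail1: "ok ((2*q+6) # 3 # (2*q+4) # (2*q+7) # omega q @ [5,2], [[],[]], [], [])"
  by (rule ok_tail_gen, rule ok_end[OF E1]) (auto simp: upt_conv_Cons sorted_append)

lemma ok_tail5: "ok ((2*q+6) # 3 # (2*q+4) # (2*q+7) # omega q @ [1,2], [[],[]], [], [])"
  by (rule ok_tail_gen, rule ok_end[OF E5]) (auto simp: upt_conv_Cons sorted_append)

lemma ok_tail2: "ok ((2*q+6) # 3 # (2*q+4) # (2*q+7) # omega q @ [1,5], [[],[]], [], [])"
  by (rule ok_tail_gen, rule ok_end[OF E2]) (auto simp: upt_conv_Cons sorted_append)

lemma ok_delA: "ok (3 # (2*q+4) # (2*q+7) # omega q @ R0, [[],[]], [], [])"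
proof -
  have "ok ([1,5,2], [[4],[3]], [6..<2*q+6] @ [2*q+7], [])"
    by (rule okE3a) auto
  moreover have "ms (omega q @ R0, [[2*q+4],[3]], [2*q+6..<2*q+6] @ [2*q+7], []) ([1,5,2], [[4],[3]], [6..<2*q+6] @ [2*q+7], [])"
    by (rule loop0) auto
  ultimately have "ok (omega q @ R0, [[2*q+4],[3]], [2*q+7], [])" using ok_pre by fastforce
  then show ?thesis by (rule ok_pre[OF sA])
qed

lemma ok_del3: "ok ((2*q+6) # (2*q+4) # (2*q+7) # omega q @ R0, [[],[]], [], [])"
proof -
  have "ok ([1,5,2], [[4],[]], [6..<2*q+8] @ [], [])"
    using E3b[of "[6..<2*q+8]"] by (intro ok_end) (auto simp: upt_conv_Cons sorted_append)
  moreover have "ms (omega q @ R0, [[2*q+4],[]], [2*q+6..<2*q+8] @ [], []) ([1,5,2], [[4],[]], [6..<2*q+8] @ [], [])"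
    by (rule loop0) auto
  ultimately have "ok (omega q @ R0, [[2*q+4],[]], [2*q+6..<2*q+8], [])" using ok_pre by fastforce
  then show ?thesis by (rule ok_pre[OF s3])
qed

lemma ok_fromF: assumes "r \<le> q" shows "ok (omega r @ R0, [[],[3]], [2*r+6..<2*q+8], [])"
proof (cases r)
  case 0
  have "ok ([1,5,2], [[],[3]], [6..<2*q+8], [])"
    using E4[of "[6..<2*q+8]"] by (intro ok_end) (auto simp: upt_conv_Cons sorted_append)
  then show ?thesis using 0 by simp
next
  case (Suc s)
  have sq: "s < q" using assms Suc by simp
  have "ok ([1,5,2], [[4],[3]], [6..<2*s+6] @ ((2*s+7) # [2*s+8..<2*q+8]), [])"
    by (rule okE3a) (auto simp: sorted_append)
  moreover have "ms (omega s @ R0, [[2*s+4],[3]], [2*s+6..<2*s+6] @ ((2*s+7) # [2*s+8..<2*q+8]), [])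
     ([1,5,2], [[4],[3]], [6..<2*s+6] @ ((2*s+7) # [2*s+8..<2*q+8]), [])"
    by (rule loop0) auto
  ultimately have "ok (omega s @ R0, [[2*s+4],[3]], (2*s+7) # [2*s+8..<2*q+8], [])"
    using ok_pre by fastforce
  then have "ok ((2*s+4) # (2*s+7) # omega s @ R0, [[],[3]], [2*s+8..<2*q+8], [])"
    using fS[OF sq] ok_pre by blast
  then show ?thesis using Suc by (simp add: omega_Suc add.commute)
qed

lemma ok_fromG: assumes "r \<le> q" shows "ok (omega r @ R0, [[2*r+4],[3]], (2*r+6) # [2*r+8..<2*q+8], [])"
proof -
  have "ok ([1,5,2], [[4],[3]], [6..<2*r+7] @ [2*r+8..<2*q+8], [])"
    by (rule okE3a) (use upt_hd[of "2*r+8" "2*q+8"] in \<open>auto simp: sorted_append\<close>)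
  moreover have "ms (omega r @ R0, [[2*r+4],[3]], [2*r+6..<2*r+7] @ [2*r+8..<2*q+8], [])
     ([1,5,2], [[4],[3]], [6..<2*r+7] @ [2*r+8..<2*q+8], [])"
    by (rule loop0) (use upt_hd[of "2*r+8" "2*q+8"] in \<open>auto simp: upt_conv_Cons\<close>)
  ultimately have "ok (omega r @ R0, [[2*r+4],[3]], [2*r+6..<2*r+7] @ [2*r+8..<2*q+8], [])"
    using ok_pre by blast
  moreover have "[2*r+6..<2*r+7] = [2*r+6]" by (simp add: upt_conv_Cons)
  ultimately show ?thesis by simp
qed



lemma ok_delF: assumes "r \<le> q"
  shows "ok ((2*q+6) # 3 # hi (Suc q) (Suc r) @ (2*r+7) # omega r @ R0, [[],[]], [], [])"
proof (cases "r = q")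
  case True
  have "ok ((2*q+6) # 3 # (2*q+7) # omega q @ R0, [[],[]], [], [])"
    by (rule ok_pre[OF sF ok_fromF]) simp
  then show ?thesis using True by simp
next
  case False
  then have rq: "r < q" using assms by simp
  have "ok (omega r @ R0, [[],[3]], [2*r+6..<2*q+8], [])" using ok_fromF assms by simp
  then have "ok ((2*r+7) # omega r @ R0, [[2*r+6,3],[]], [2*r+8..<2*q+8], [])"
    using bF[OF rq] ok_pre by blast
  moreover have "ms (hi q (Suc r) @ (2*r+7) # omega r @ R0, [[2*q+4,3],[]], [2*q+6..<2*q+8] @ [], [])
      ((2*r+7) # omega r @ R0, [[2*(Suc r)+4,3],[]], [2*(Suc r)+6..<2*q+8] @ [], [])"
    by (rule loop) (use rq in auto)
  ultimately have "ok (hi q (Suc r) @ (2*r+7) # omega r @ R0, [[2*q+4,3],[]], [2*q+6..<2*q+8], [])"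
    using ok_pre by (simp add: add.commute)
  then have "ok ((2*q+6) # 3 # (2*q+4) # (2*q+7) # hi q (Suc r) @ (2*r+7) # omega r @ R0, [[],[]], [], [])"
    by (rule ok_pre[OF sStd])
  then show ?thesis using rq by (simp add: hi_Suc)
qed

lemma ok_delG: assumes "r \<le> q"
  shows "ok ((2*q+6) # 3 # hi (Suc q) (Suc r) @ (2*r+4) # omega r @ R0, [[],[]], [], [])"
proof (cases "r = q")
  case True
  have "ok (omega q @ R0, [[2*q+4],[3]], (2*q+6) # [2*q+8..<2*q+8], [])" using ok_fromG[of q q] by simp
  then have "ok ((2*q+6) # 3 # (2*q+4) # omega q @ R0, [[],[]], [], [])"
    by (intro ok_pre[OF sG]) simp
  then show ?thesis using True by simp
next
  case False
  then have rq: "r < q" using assms by simp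
  have "ok (omega r @ R0, [[2*r+4],[3]], (2*r+6) # [2*r+8..<2*q+8], [])" using ok_fromG assms by simp
  then have "ok ((2*r+4) # omega r @ R0, [[2*r+6,3],[]], [2*r+8..<2*q+8], [])"
    using bG[OF rq] ok_pre by blast
  moreover have "ms (hi q (Suc r) @ (2*r+4) # omega r @ R0, [[2*q+4,3],[]], [2*q+6..<2*q+8] @ [], [])
      ((2*r+4) # omega r @ R0, [[2*(Suc r)+4,3],[]], [2*(Suc r)+6..<2*q+8] @ [], [])"
    by (rule loop) (use rq in auto)
  ultimately have "ok (hi q (Suc r) @ (2*r+4) # omega r @ R0, [[2*q+4,3],[]], [2*q+6..<2*q+8], [])"
    using ok_pre by (simp add: add.commute)
  then have "ok ((2*q+6) # 3 # (2*q+4) # (2*q+7) # hi q (Suc r) @ (2*r+4) # omega r @ R0, [[],[]], [], [])"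
    by (rule ok_pre[OF sStd])
  then show ?thesis using rq by (simp add: hi_Suc)
qed

lemma del_app: "delete_at (length xs) (xs @ y # ys) = xs @ ys"
  by (simp add: delete_at_def)

lemma ok_sortable: "ok (\<pi>, [[],[]], [], []) \<Longrightarrow> distinct \<pi> \<Longrightarrow> sortable 2 \<pi>"
  unfolding ok_def using run_sortable by blast

lemma distinct_del: "p < length (alpha j) \<Longrightarrow> distinct (delete_at p (alpha j))"
  using delete_at_filter[OF distinct_alpha] distinct_alpha by simp

lemma omega_split: "r \<le> q \<Longrightarrow> omega (Suc q) = hi (Suc q) (Suc r) @ [2*r+4, 2*r+7] @ omega r"
  using hi_split[of "Suc r" "Suc q"] by (simp add: omega_hi hi_Suc)

lemma ok_del_Suc: assumes "p < 2*q+7" shows "ok (delete_at p (alpha (Suc q)), [[],[]], [], [])"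
proof -
  have al: "alpha (Suc q) = [2*q+6, 3] @ omega (Suc q) @ R0" by (simp add: alpha_eq)
  have om: "omega (Suc q) = [2*q+4, 2*q+7] @ omega q" by (simp add: omega_Suc)
  have lo: "length ([2*q+6, 3] @ omega (Suc q)) = 2*q+4" by (simp add: length_omega)
  consider "p = 0" | "p = 1" | "2 \<le> p \<and> p < 2*q+4" | "p = 2*q+4" | "p = 2*q+5" | "p = 2*q+6"
    using assms by linarith
  then show ?thesis
  proof cases
    case 1
    have "delete_at p (alpha (Suc q)) = 3 # (2*q+4) # (2*q+7) # omega q @ R0"
      using del_app[of "[]" "2*q+6"] 1 by (simp add: al om)
    then show ?thesis using ok_delA by simp
  next
    case 2
    have "delete_at p (alpha (Suc q)) = (2*q+6) # (2*q+4) # (2*q+7) # omega q @ R0"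
      using del_app[of "[2*q+6]" 3] 2 by (simp add: al om)
    then show ?thesis using ok_del3 by simp
  next
    case 3
    define r where "r = q - (p-2) div 2"
    have rq: "r \<le> q" unfolding r_def by simp
    have lh: "length ([2*q+6, 3] @ hi (Suc q) (Suc r)) = 2 + 2*(q-r)"
      using length_hi[of "Suc r" "Suc q"] rq by simp
    have a2: "alpha (Suc q) = ([2*q+6, 3] @ hi (Suc q) (Suc r)) @ (2*r+4) # (2*r+7) # omega r @ R0"
      using al omega_split[OF rq] by simp
    consider "p = 2 + 2*(q-r)" | "p = 3 + 2*(q-r)" using 3 unfolding r_def by linarith
    then show ?thesis
    proof cases
      case 1
      have "delete_at p (alpha (Suc q)) = (2*q+6) # 3 # hi (Suc q) (Suc r) @ (2*r+7) # omega r @ R0"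
        unfolding a2 1 lh[symmetric] del_app by simp
      then show ?thesis using ok_delF[OF rq] by simp
    next
      case 2
      have a3: "alpha (Suc q) = ([2*q+6, 3] @ hi (Suc q) (Suc r) @ [2*r+4]) @ (2*r+7) # omega r @ R0"
        using a2 by simp
      have lh3: "length ([2*q+6, 3] @ hi (Suc q) (Suc r) @ [2*r+4]) = 3 + 2*(q-r)" using lh by simp
      have "delete_at p (alpha (Suc q)) = (2*q+6) # 3 # hi (Suc q) (Suc r) @ (2*r+4) # omega r @ R0"
        unfolding a3 2 lh3[symmetric] del_app by simp
      then show ?thesis using ok_delG[OF rq] by simp
    qed
  next
    case 4
    have pe: "p = length ([2*q+6, 3] @ omega (Suc q))" using lo 4 by simp
    have al': "alpha (Suc q) = ([2*q+6, 3] @ omega (Suc q)) @ 1 # [5,2]" by (simp add: alpha_eq)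
    have "delete_at p (alpha (Suc q)) = ([2*q+6, 3] @ omega (Suc q)) @ [5,2]"
      unfolding al' pe del_app ..
    then show ?thesis using ok_tail1 by (simp add: om)
  next
    case 5
    have pe: "p = length ([2*q+6, 3] @ omega (Suc q) @ [1])" using lo 5 by simp
    have al': "alpha (Suc q) = ([2*q+6, 3] @ omega (Suc q) @ [1]) @ 5 # [2]" by (simp add: alpha_eq)
    have "delete_at p (alpha (Suc q)) = ([2*q+6, 3] @ omega (Suc q) @ [1]) @ [2]"
      unfolding al' pe del_app ..
    then show ?thesis using ok_tail5 by (simp add: om)
  next
    case 6
    have pe: "p = length ([2*q+6, 3] @ omega (Suc q) @ [1,5])" using lo 6 by simp
    have al': "alpha (Suc q) = ([2*q+6, 3] @ omega (Suc q) @ [1,5]) @ 2 # []" by (simp add: alpha_eq)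
    have "delete_at p (alpha (Suc q)) = ([2*q+6, 3] @ omega (Suc q) @ [1,5]) @ []"
      unfolding al' pe del_app ..
    then show ?thesis using ok_tail2 by (simp add: om)
  qed
qed



lemma ok_del_0: assumes "p < 5" shows "ok (delete_at p (alpha 0), [[],[]], [], [])"
proof -
  have a: "alpha 0 = [4,3,1,5,2]" by (simp add: alpha_def omega_def)
  consider "p = 0" | "p = 1" | "p = 2" | "p = 3" | "p = 4" using assms by linarith
  then show ?thesis
  proof cases
    case 1
    have "ok ([1,5,2], [[],[3]], [], [])" using E4[of "[]"] by (intro ok_end) auto
    moreover have "ms ([3,1,5,2], [[],[]], [], []) ([1,5,2], [[],[3]], [], [])"
      by (rule rdR, simp, rule mvR, simp, simp)
    ultimately have "ok ([3,1,5,2], [[],[]], [], [])" using ok_pre by blast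
    then show ?thesis using 1 by (simp add: a delete_at_def)
  next
    case 2
    have "ok ([1,5,2], [[4],[]], [], [])" using E3b[of "[]"] by (intro ok_end) auto
    moreover have "ms ([4,1,5,2], [[],[]], [], []) ([1,5,2], [[4],[]], [], [])"
      by (rule rdR, simp, simp)
    ultimately have "ok ([4,1,5,2], [[],[]], [], [])" using ok_pre by blast
    then show ?thesis using 2 by (simp add: a delete_at_def)
  next
    case 3
    have "ms ([4,3,5,2], [[],[]], [], []) ([],[[],[]],[],[2,3,4,5])"
      apply (rule rdR, simp) apply (rule mvR, simp) apply (rule rdR, simp) apply (rule rdR, simp)
      apply (rule mvR, simp) apply (rule tkR, simp) apply (rule tkR, simp) apply (rule mvR, simp)
      apply (rule tkR, simp) apply (rule rdR, simp) apply (rule mvR, simp) apply (rule tkR, simp)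
      apply (rule flushR) apply simp done
    then have "ok ([4,3,5,2], [[],[]], [], [])" by (rule ok_end) simp
    then show ?thesis using 3 by (simp add: a delete_at_def)
  next
    case 4
    have "ms ([4,3,1,2], [[],[]], [], []) ([],[[],[]],[],[1,2,3,4])"
      apply (rule rdR, simp) apply (rule mvR, simp) apply (rule tkR, simp) apply (rule rdR, simp)
      apply (rule mvR, simp) apply (rule tkR, simp) apply (rule rdR, simp) apply (rule mvR, simp)
      apply (rule tkR, simp) apply (rule otR) apply (rule rdR, simp) apply (rule mvR, simp)
      apply (rule tkR, simp) apply (rule flushR) apply simp done
    then have "ok ([4,3,1,2], [[],[]], [], [])" by (rule ok_end) simp
    then show ?thesis using 4 by (simp add: a delete_at_def)
  next
    case 5
    have "ms ([4,3,1,5], [[],[]], [], []) ([],[[],[]],[],[1,3,4,5])"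
      apply (rule rdR, simp) apply (rule mvR, simp) apply (rule tkR, simp) apply (rule rdR, simp)
      apply (rule mvR, simp) apply (rule tkR, simp) apply (rule rdR, simp) apply (rule mvR, simp)
      apply (rule tkR, simp) apply (rule otR, rule otR, rule otR) apply (rule rdR, simp)
      apply (rule mvR, simp) apply (rule tkR, simp) apply (rule flushR) apply simp done
    then have "ok ([4,3,1,5], [[],[]], [], [])" by (rule ok_end) simp
    then show ?thesis using 5 by (simp add: a delete_at_def)
  qed
qed

lemma sortable_del: assumes "p < length (alpha j)" shows "sortable 2 (delete_at p (alpha j))"
proof -
  have "ok (delete_at p (alpha j), [[],[]], [], [])"
  proof (cases j)
    case 0 then show ?thesis using assms ok_del_0 by (simp add: length_alpha)
  next
    case (Suc q) then show ?thesis using assms ok_del_Suc by (simp add: length_alpha)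
  qed
  then show ?thesis using ok_sortable distinct_del[OF assms] by blast
qed

lemma part4: "p < length (alpha j) \<Longrightarrow> sortable 2 (standardize (delete_at p (alpha j)))"
  using sortable_order_iso[OF order_iso_standardize distinct_del sortable_del] by blast

lemma antichain: assumes "i \<noteq> j" shows "\<not> pattern_le (alpha i) (alpha j)"
proof
  assume "pattern_le (alpha i) (alpha j)"
  then obtain xs where sx: "subseq xs (alpha j)" and oi: "order_iso xs (alpha i)"
    unfolding pattern_le_def by blast
  have lx: "length xs = length (alpha i)" using oi unfolding order_iso_def by simp
  have "length xs \<le> length (alpha j)" using sx by (rule list_emb_length)
  then have "i < j" using lx assms by (simp add: length_alpha)
  then have lt: "length xs < length (alpha j)" using lx by (simp add: length_alpha)
  have dj: "distinct (alpha j)" by (rule distinct_alpha)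
  define S where "S = set xs"
  have xf: "xs = filter (\<lambda>x. x \<in> S) (alpha j)" unfolding S_def using subseq_filter[OF sx dj] .
  have "\<exists>y\<in>set (alpha j). y \<notin> S"
  proof (rule ccontr)
    assume "\<not> ?thesis"
    then have "filter (\<lambda>x. x \<in> S) (alpha j) = alpha j" by (auto intro: filter_True)
    then have "xs = alpha j" using xf by simp
    then show False using lt by simp
  qed
  then obtain y where y: "y \<in> set (alpha j)" "y \<notin> S" by blast
  then obtain p where p: "p < length (alpha j)" "alpha j ! p = y" by (metis in_set_conv_nth)
  have dd: "delete_at p (alpha j) = filter (\<lambda>x. x \<noteq> y) (alpha j)"
    using delete_at_filter[OF dj p(1)] p(2) by simp
  have "sortable 2 (filter (\<lambda>x. x \<in> S) (delete_at p (alpha j)))"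
    by (rule sortable_filter[OF distinct_del[OF p(1)] sortable_del[OF p(1)]])
  moreover have "filter (\<lambda>x. x \<in> S) (delete_at p (alpha j)) = filter (\<lambda>x. x \<in> S) (alpha j)"
  proof -
    have "filter (\<lambda>x. x \<noteq> y \<and> x \<in> S) (alpha j) = filter (\<lambda>x. x \<in> S) (alpha j)"
      by (rule filter_cong) (use y(2) in auto)
    then show ?thesis unfolding dd filter_filter by simp
  qed
  ultimately have "sortable 2 (filter (\<lambda>x. x \<in> S) (alpha j))" by simp
  moreover have "distinct (filter (\<lambda>x. x \<in> S) (alpha j))" using dj by simp
  ultimately have "sortable 2 (alpha i)" using sortable_order_iso[OF oi[unfolded xf]] by blast
  then show False using not_sortable_alpha by blast
qed

lemma inf_range: "infinite (range alpha)"
proof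
  assume "finite (range alpha)"
  moreover have "inj alpha"
  proof (rule injI)
    fix x y assume "alpha x = alpha y"
    then have "length (alpha x) = length (alpha y)" by simp
    then show "x = y" by (simp add: length_alpha)
  qed
  ultimately have "finite (UNIV :: nat set)" using finite_imageD by blast
  then show False by simp
qed

theorem mainTheorem3:
  shows "infinite (range alpha)
     \<and> (\<forall>i j. i \<noteq> j \<longrightarrow> \<not> pattern_le (alpha i) (alpha j))
     \<and> (\<forall>j. \<not> sortable 2 (alpha j))
     \<and> (\<forall>j. \<forall>p < length (alpha j). sortable 2 (standardize (delete_at p (alpha j))))"
  using inf_range antichain not_sortable_alpha part4 by blast


end
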